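(* Let $k=3$, $t\ge 2$, $d=2^t-1$, $n\ge d$ and $j=n-d$. Then in $\mathbb{F}_2[w_2,w_3]$, \[ r_{j-1}q_n+w_3r_{j-2}q_{n-1}+r_jq_{n-2}=0, \] a homogeneous relation of degree $(d-2)+3j$.
   Context: In $\mathbb{F}_2[w_2,w_3]$ ($\deg w_2=2,\deg w_3=3$): $q_0=1$, $q_m=0$ for $m<0$, $q_m=w_2q_{m-2}+w_3q_{m-3}$ for $m\ge1$; and $r_0=1$, $r_m=0$ for $m<0$, $r_{m+1}=w_2r_m+w_3^2r_{m-2}$ for $m\ge 0$ (so $\deg r_m=2m$). *)

theory Defs
  imports "HOL-Computational_Algebra.Polynomial" "HOL-Library.Z2"
begin

text \<open>F_2[w2,w3] is modelled as (bit poly) poly: the outer variable is w3,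
  coefficients are polynomials over F_2 = bit in the variable w2.\<close>

type_synonym F2w = "bit poly poly"

definition w2 :: F2w where "w2 = [:[:0, 1:]:]"
definition w3 :: F2w where "w3 = [:0, 1:]"

text \<open>q_0 = 1, q_m = 0 for m<0, q_m = w2 q_(m-2) + w3 q_(m-3) for m \<ge> 1
  (so q_1 = 0, q_2 = w2).\<close>
fun qN :: "nat \<Rightarrow> F2w" where
  "qN 0 = 1"
| "qN (Suc 0) = 0"
| "qN (Suc (Suc 0)) = w2 * qN 0"
| "qN (Suc (Suc (Suc m))) = w2 * qN (Suc m) + w3 * qN m"

definition q :: "int \<Rightarrow> F2w" where
  "q m = (if m < 0 then 0 else qN (nat m))"

text \<open>r_0 = 1, r_m = 0 for m<0, r_(m+1) = w2 r_m + w3^2 r_(m-2) for m \<ge> 0.\<close>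
fun rN :: "nat \<Rightarrow> F2w" where
  "rN 0 = 1"
| "rN (Suc 0) = w2 * rN 0"
| "rN (Suc (Suc 0)) = w2 * rN (Suc 0)"
| "rN (Suc (Suc (Suc m))) = w2 * rN (Suc (Suc m)) + w3^2 * rN m"

definition r :: "int \<Rightarrow> F2w" where
  "r m = (if m < 0 then 0 else rN (nat m))"

end

theory Submission
  imports Defs
begin

lemma two0: "(2::F2w) = 0"
proof -
  have "(1::F2w) + 1 = 0" by (simp add: one_pCons)
  thus ?thesis by (simp add: one_add_one)
qed

lemma dbl0: "(x::F2w) + x = 0"
proof -
  have "x + x = 2 * x" by (rule mult_2[symmetric])
  also have "... = 0" by (simp only: two0 mult_zero_left)
  finally show ?thesis .
qed

lemma sq_add: "((a::F2w) + b)^2 = a^2 + b^2"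
proof -
  have "(a+b)^2 = a^2 + b^2 + (a*b + a*b)" by (simp add: power2_eq_square algebra_simps)
  thus ?thesis by (simp add: dbl0)
qed

lemma q_int: "q (int k) = qN k" by (simp add: q_def)
lemma r_int: "r (int k) = rN k" by (simp add: r_def)

lemma qrec: "m \<noteq> 0 \<Longrightarrow> q m = w2 * q (m-2) + w3 * q (m-3)"
proof -
  assume m0: "m \<noteq> 0"
  consider "m < 0" | "m = 1" | "m = 2" | "m \<ge> 3" using m0 by linarith
  thus ?thesis
  proof cases
    case 1 thus ?thesis by (simp add: q_def)
  next
    case 2 thus ?thesis by (simp add: q_def)
  next
    case 3 thus ?thesis by (simp add: q_def numeral_2_eq_2)
  next
    case 4
    define k where "k = nat (m - 3)"
    have e: "m = int (Suc (Suc (Suc k)))" "m - 2 = int (Suc k)" "m - 3 = int k"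
      using 4 unfolding k_def by auto
    have f: "q m = qN (Suc (Suc (Suc k)))" "q (m-2) = qN (Suc k)" "q (m-3) = qN k"
      by (simp only: e(1) q_int, simp only: e(2) q_int, simp only: e(3) q_int)
    show ?thesis by (simp only: f qN.simps)
  qed
qed

lemma rrec: "m \<ge> 0 \<Longrightarrow> r (m+1) = w2 * r m + w3^2 * r (m-2)"
proof -
  assume "m \<ge> 0"
  then obtain k where k: "m = int k" using nonneg_int_cases by blast
  show ?thesis
  proof (cases k)
    case 0 thus ?thesis using k by (simp add: r_def)
  next
    case (Suc k1)
    show ?thesis
    proof (cases k1)
      case 0 thus ?thesis using k Suc by (simp add: r_def numeral_2_eq_2)
    next
      case (Suc k2)
      have a: "m + 1 = int (Suc (Suc (Suc k2)))" "m - 2 = int k2"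
        using k \<open>k = Suc k1\<close> Suc by auto
      have a2: "m = int (Suc (Suc k2))" using k \<open>k = Suc k1\<close> Suc by auto
      have f: "r (m+1) = rN (Suc (Suc (Suc k2)))" "r m = rN (Suc (Suc k2))" "r (m-2) = rN k2"
        by (simp only: a(1) r_int, simp only: a2 r_int, simp only: a(2) r_int)
      show ?thesis by (simp only: f rN.simps)
    qed
  qed
qed

lemma F: "N - int j \<ge> 1 \<Longrightarrow>
  r (int j - 1) * q N + w3 * r (int j - 2) * q (N - 1) + r (int j) * q (N - 2)
   = w3^j * q (N - int j - 2)"
proof (induction j arbitrary: N)
  case 0 thus ?case by (simp add: r_def)
next
  case (Suc j)
  have p: "1 \<le> (N - 1) - int j" using Suc.prems by simp
  have e: "N - 1 - 1 = N - 2" "N - 1 - 2 = N - 3" "N - 1 - int j - 2 = N - int (Suc j) - 2" by auto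
  have IH: "r (int j - 1) * q (N-1) + w3 * r (int j - 2) * q (N - 2) + r (int j) * q (N - 3)
   = w3^j * q (N - int (Suc j) - 2)" using Suc.IH[OF p] unfolding e .
  have rr: "r (int j + 1) = w2 * r (int j) + w3^2 * r (int j - 2)" using rrec[of "int j"] by simp
  have qq: "q N = w2 * q (N-2) + w3 * q (N-3)" using qrec[of N] Suc.prems by simp
  have "r (int (Suc j) - 1) * q N + w3 * r (int (Suc j) - 2) * q (N - 1) + r (int (Suc j)) * q (N - 2)
     = r (int j) * (w2 * q (N-2) + w3 * q (N-3)) + w3 * r (int j - 1) * q (N - 1)
       + (w2 * r (int j) + w3^2 * r (int j - 2)) * q (N - 2)"
    using rr qq by (simp add: algebra_simps)
  also have "... = w3 * (r (int j - 1) * q (N-1) + w3 * r (int j - 2) * q (N - 2) + r (int j) * q (N - 3))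
      + (w2 * r (int j) * q (N-2) + w2 * r (int j) * q (N-2))"
    by (simp add: algebra_simps power2_eq_square)
  also have "... = w3^(Suc j) * q (N - int (Suc j) - 2)"
    using IH by (simp add: dbl0)
  finally show ?case .
qed

lemma dbl: "q (2 * int k) = (q (int k))^2 + w2 * (q (int k - 1))^2 \<and>
            q (2 * int k + 1) = w3 * (q (int k - 1))^2"
proof -
  have "(q (2 * int k) = (q (int k))^2 + w2 * (q (int k - 1))^2 \<and>
            q (2 * int k + 1) = w3 * (q (int k - 1))^2) \<and>
        (q (2 * int (k+1)) = (q (int (k+1)))^2 + w2 * (q (int (k+1) - 1))^2 \<and>
            q (2 * int (k+1) + 1) = w3 * (q (int (k+1) - 1))^2)"
  proof (induction k)
    case 0
    have "q 2 = w2" "q 3 = w3" "q 1 = 0" "q 0 = 1" by (simp_all add: q_def numeral_2_eq_2 numeral_3_eq_3)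
    thus ?case by (simp add: q_def)
  next
    case (Suc k)
    let ?k = "int k"
    have A: "q (2*?k+2) = q (?k+1)^2 + w2 * q ?k ^2" "q (2*?k+3) = w3 * q ?k^2"
      using Suc.IH by (simp_all add: algebra_simps)
    have B: "q (2*?k+1) = w3 * q (?k-1)^2" using Suc.IH by simp
    have c4: "q (2*?k+4) = w2 * q (2*?k+2) + w3 * q (2*?k+1)" using qrec[of "2*?k+4"]
      by (simp add: algebra_simps)
    have c5: "q (2*?k+5) = w2 * q (2*?k+3) + w3 * q (2*?k+2)" using qrec[of "2*?k+5"]
      by (simp add: algebra_simps)
    have c2: "q (?k+2) = w2 * q ?k + w3 * q (?k - 1)" using qrec[of "?k+2"] by (simp add: algebra_simps)
    have "q (2*?k+4) = q (?k+2)^2 + w2 * q (?k+1)^2"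
      unfolding c4 A B c2 sq_add by (simp add: algebra_simps power2_eq_square)
    moreover have "q (2*?k+5) = w3 * q (?k+1)^2"
    proof -
      have "q (2*?k+5) = w3 * q (?k+1)^2 + (w2*w3*q ?k^2 + w2*w3*q ?k^2)"
        unfolding c5 A by (simp add: algebra_simps)
      thus ?thesis by (simp add: dbl0)
    qed
    ultimately show ?case using Suc.IH by (simp add: algebra_simps)
  qed
  thus ?thesis by blast
qed

lemma qzero: "t \<ge> 2 \<Longrightarrow> q (2^t - 3) = 0"
proof (induction t rule: dec_induct)
  case base thus ?case by (simp add: q_def)
next
  case (step t)
  define k where "k = (2::nat)^t - 2"
  have "(2::nat)^2 \<le> 2^t" by (rule power_increasing) (use step.hyps in auto)
  hence t4: "(2::nat)^t \<ge> 4" by simp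
  have kk: "int k = 2^t - 2" using t4 unfolding k_def by (simp add: of_nat_diff)
  have "(2::int)^(Suc t) - 3 = 2 * int k + 1" using kk by simp
  hence "q (2^(Suc t) - 3) = w3 * (q (int k - 1))^2" using conjunct2[OF dbl[of k]] by (simp add: add.commute)
  also have "int k - 1 = 2^t - 3" using kk by simp
  finally show ?case using step.IH by simp
qed

theorem mainTheorem12:
  fixes t n :: nat and d j :: int
  assumes "t \<ge> 2"
    and "d = 2 ^ t - 1"
    and "int n \<ge> d"
    and "j = int n - d"
  shows "r (j - 1) * q (int n) + w3 * r (j - 2) * q (int n - 1) + r j * q (int n - 2) = 0"
proof -
  have "(2::int)^2 \<le> 2^t" by (rule power_increasing) (use assms(1) in auto)
  hence t4: "(2::int)^t \<ge> 4" by simp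
  define jj where "jj = nat j"
  have jj: "j = int jj" using assms t4 unfolding jj_def by simp
  have "int n - int jj \<ge> 1" using jj assms t4 by simp
  from F[OF this] have "r (j - 1) * q (int n) + w3 * r (j - 2) * q (int n - 1) + r j * q (int n - 2)
     = w3^jj * q (int n - j - 2)" using jj by simp
  also have "int n - j - 2 = 2^t - 3" using assms by simp
  finally show ?thesis using qzero[OF assms(1)] by simp
qed

end
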